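(* Let $\mathtt b\ge2$ and let $(\mathtt T_u,r(u))$, $u\in S$, be a finite family of finite rooted graph trees; write $|x|$ for the graph distance from $r(u)$ to $x\in\mathtt T_u$ and, for $1\le i\le|x|$, $x_i$ for the ancestor of $x$ at height $i$. Let $V^u_x$, $x\in\mathtt T_u$, $u\in S$, be independent uniform random variables on $\{1,\dots,\mathtt b\}$, set $Z^u_x=(V^u_{x_1},\dots,V^u_{x_{|x|}})\in\mathbb W_{\mathtt b}$ (with $Z^u_{r(u)}=\varnothing$) and $\mathtt R_u=\{Z^u_x;x\in\mathtt T_u\}$. For $c\in\mathbb N^*$ let $M_c=\sum_{u\in S}\#\{x\in\mathtt T_u:|x|\le c\}$. Let $w_u\in\mathbb W_{\mathtt b}$, $u\in S$ be deterministic. Then there exists an event $A_c$ with $\mathbf P(A_c)\le\mathtt b^{-c}M_c^2$ such that on the complement of $A_c$, $$0\le\sum_{u\in S}\#\mathtt R_u-\#\Big(\bigcup_{u\in S}w_u\ast\mathtt R_u\Big)\le M_c.$$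
   Context: $\mathbb W_{\mathtt b}$ is the set of finite words over $\{1,\dots,\mathtt b\}$; $w\ast v$ denotes concatenation of words and $w\ast\mathtt R=\{w\ast v;v\in\mathtt R\}$. *)

theory Defs
  imports "HOL-Probability.Probability"
begin

text \<open>Finite rooted trees are represented (up to isomorphism) as finite, nonempty,
 prefix-closed sets of words over nat (Ulam--Harris labelling); the root is the
 empty list, the height is the length, and the ancestor of x at height i is take i x.\<close>
definition finite_rooted_tree :: "nat list set \<Rightarrow> bool" where
  "finite_rooted_tree T \<longleftrightarrow> finite T \<and> [] \<in> T \<and> (\<forall>x\<in>T. \<forall>i. take i x \<in> T)"

definition words :: "nat \<Rightarrow> nat list set" where
  "words b = {w. set w \<subseteq> {1..b}}"

definition word_cat :: "nat list \<Rightarrow> nat list set \<Rightarrow> nat list set" where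
  "word_cat w R = (\<lambda>v. w @ v) ` R"

definition label_index :: "'u set \<Rightarrow> ('u \<Rightarrow> nat list set) \<Rightarrow> ('u \<times> nat list) set" where
  "label_index S T = {(u, x). u \<in> S \<and> x \<in> T u}"

definition label_law :: "nat \<Rightarrow> 'u set \<Rightarrow> ('u \<Rightarrow> nat list set) \<Rightarrow> (('u \<times> nat list) \<Rightarrow> nat) pmf" where
  "label_law b S T = pmf_of_set (PiE (label_index S T) (\<lambda>_. {1..b}))"

definition Zword :: "(('u \<times> nat list) \<Rightarrow> nat) \<Rightarrow> 'u \<Rightarrow> nat list \<Rightarrow> nat list" where
  "Zword V u x = map (\<lambda>i. V (u, take i x)) [1..<Suc (length x)]"

definition Rset :: "(('u \<times> nat list) \<Rightarrow> nat) \<Rightarrow> ('u \<Rightarrow> nat list set) \<Rightarrow> 'u \<Rightarrow> nat list set" where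
  "Rset V T u = Zword V u ` T u"

definition Mc :: "'u set \<Rightarrow> ('u \<Rightarrow> nat list set) \<Rightarrow> nat \<Rightarrow> nat" where
  "Mc S T c = (\<Sum>u\<in>S. card {x \<in> T u. length x \<le> c})"

end

theory Submission
  imports Defs
begin

lemma Zword_length [simp]: "length (Zword V u x) = length x"
  by (simp add: Zword_def del: upt_Suc)

lemma Zword_nth: "k < length x \<Longrightarrow> Zword V u x ! k = V (u, take (Suc k) x)"
  by (simp add: Zword_def del: upt_Suc)

lemma Zword_take: "i \<le> length x \<Longrightarrow> Zword V u (take i x) = take i (Zword V u x)"
proof -
  assume i: "i \<le> length x"
  have "take i [1..<Suc (length x)] = [1..<Suc i]" using take_upt[of 1 i "Suc (length x)"] i by simp
  have "Zword V u (take i x) = map (\<lambda>j. V (u, take j (take i x))) [1..<Suc i]"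
    using i by (simp add: Zword_def min_absorb2 del: upt_Suc)
  also have "\<dots> = map (\<lambda>j. V (u, take j x)) [1..<Suc i]"
    by (rule map_cong) (auto simp: take_take min_absorb1)
  also have "\<dots> = take i (Zword V u x)"
    using \<open>take i [1..<Suc (length x)] = [1..<Suc i]\<close> by (simp add: Zword_def take_map del: upt_Suc)
  finally show ?thesis .
qed

lemma Zword_cong:
  assumes "\<And>j. V1 (u, take j x) = V2 (u, take j x)"
  shows "Zword V1 u x = Zword V2 u x"
  using assms by (simp add: Zword_def)

lemma pair_count:
  fixes I :: "('u \<times> nat list) set"
  assumes fin: "finite I" and neq: "u \<noteq> u'" and lx: "length x = c"
    and JI: "(\<lambda>i. (u, take i x)) ` {1..c} \<subseteq> I"
    and la: "length a \<le> length a'"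
  shows "card {V \<in> PiE I (\<lambda>_. {1..b}). \<exists>zs. a' @ Zword V u' x' = a @ Zword V u x @ zs} * b ^ c
           \<le> b ^ card I"
proof -
  define J where "J = (\<lambda>i. (u, take i x)) ` {1..c}"
  define Ap where "Ap = {V \<in> PiE I (\<lambda>_. {1..b}). \<exists>zs. a' @ Zword V u' x' = a @ Zword V u x @ zs}"
  have cJ: "card J = c"
    unfolding J_def
  proof (subst card_image)
    show "inj_on (\<lambda>i. (u, take i x)) {1..c}"
    proof (rule inj_onI)
      fix i j assume "i \<in> {1..c}" "j \<in> {1..c}" "(u, take i x) = (u, take j x)"
      then have "length (take i x) = length (take j x)" by simp
      then show "i = j" using \<open>i \<in> {1..c}\<close> \<open>j \<in> {1..c}\<close> lx by simp
    qed
  qed simp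
  have JI': "J \<subseteq> I" using JI J_def by simp
  have finJ: "finite J" using JI' fin finite_subset by blast
  have inj: "inj_on (\<lambda>V. restrict V (I - J)) Ap"
  proof (rule inj_onI)
    fix V1 V2 assume V1: "V1 \<in> Ap" and V2: "V2 \<in> Ap"
      and eq: "restrict V1 (I - J) = restrict V2 (I - J)"
    have PI1: "V1 \<in> PiE I (\<lambda>_. {1..b})" and PI2: "V2 \<in> PiE I (\<lambda>_. {1..b})"
      using V1 V2 Ap_def by auto
    have out: "V1 k = V2 k" if "k \<notin> J" for k
    proof (cases "k \<in> I")
      case True
      then have "k \<in> I - J" using that by simp
      have "restrict V1 (I - J) k = restrict V2 (I - J) k" using eq by (rule fun_cong)
      then show ?thesis using \<open>k \<in> I - J\<close> by (simp only: restrict_apply')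
    next
      case False
      then show ?thesis using PiE_arb[OF PI1 False] PiE_arb[OF PI2 False] by simp
    qed
    have other: "V1 (u', take j x') = V2 (u', take j x')" for j
      by (rule out) (use neq in \<open>auto simp: J_def\<close>)
    have Zeq: "Zword V1 u' x' = Zword V2 u' x'" by (rule Zword_cong) (rule other)
    obtain zs1 where z1: "a' @ Zword V1 u' x' = a @ Zword V1 u x @ zs1" using V1 Ap_def by auto
    obtain zs2 where z2: "a' @ Zword V2 u' x' = a @ Zword V2 u x @ zs2" using V2 Ap_def by auto
    have inJ: "V1 k = V2 k" if "k \<in> J" for k
    proof -
      obtain i where i: "i \<in> {1..c}" "k = (u, take i x)" using \<open>k \<in> J\<close> J_def by auto
      obtain j where j: "i = Suc j" using i(1) by (cases i) auto
      have jc: "j < length x" using i(1) j lx by simp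
      let ?n = "length a + j"
      have "V1 k = Zword V1 u x ! j" using i(2) j Zword_nth[OF jc, of V1 u] by simp
      also have "\<dots> = (a @ Zword V1 u x @ zs1) ! ?n" using jc by (simp add: nth_append_length_plus nth_append)
      also have "\<dots> = (a @ Zword V2 u x @ zs2) ! ?n"
      proof -
        have "a @ Zword V1 u x @ zs1 = a @ Zword V2 u x @ zs2" using z1 z2 Zeq by metis
        then show ?thesis by (rule arg_cong)
      qed
      also have "\<dots> = Zword V2 u x ! j" using jc by (simp add: nth_append_length_plus nth_append)
      also have "\<dots> = V2 k" using i(2) j Zword_nth[OF jc, of V2 u] by simp
      finally show ?thesis .
    qed
    show "V1 = V2"
    proof
      fix k show "V1 k = V2 k" using inJ out by blast
    qed
  qed
  have img: "(\<lambda>V. restrict V (I - J)) ` Ap \<subseteq> PiE (I - J) (\<lambda>_. {1..b})"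
    unfolding Ap_def by (auto simp: restrict_PiE_iff PiE_def Pi_def)
  have "card Ap \<le> card (PiE (I - J) (\<lambda>_. {1..b::nat}))"
    using card_inj_on_le[OF inj img] fin by (simp add: finite_PiE)
  also have "\<dots> = b ^ card (I - J)" using fin by (simp add: card_PiE)
  also have "card (I - J) = card I - c" using card_Diff_subset[OF finJ JI'] cJ by simp
  finally have "card Ap * b ^ c \<le> b ^ (card I - c) * b ^ c" by (rule mult_right_mono) simp
  also have "\<dots> = b ^ card I"
  proof -
    have "card I - c + c = card I" using card_mono[OF fin JI'] cJ by simp
    then show ?thesis by (metis power_add)
  qed
  finally show ?thesis unfolding Ap_def .
qed

lemma nc_from:
  assumes trees: "\<And>u. u \<in> S \<Longrightarrow> finite_rooted_tree (T u)"
    and notA: "\<not> (\<exists>u\<in>S. \<exists>u'\<in>S. u \<noteq> u' \<and> length (w u) \<le> length (w u') \<and>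
       (\<exists>x\<in>T u. \<exists>x'\<in>T u'. length x = c \<and> length x' = c \<and>
         (\<exists>zs. w u' @ Zword V u' x' = w u @ Zword V u x @ zs)))"
  shows "\<forall>u\<in>S. \<forall>u'\<in>S. u \<noteq> u' \<longrightarrow> (\<forall>x\<in>T u. \<forall>x'\<in>T u'. c \<le> length x \<longrightarrow> c \<le> length x' \<longrightarrow>
            w u @ Zword V u x \<noteq> w u' @ Zword V u' x')"
proof -
  have key: False if u: "u \<in> S" and u': "u' \<in> S" and neq: "u \<noteq> u'"
    and le: "length (w u) \<le> length (w u')" and x: "x \<in> T u" and x': "x' \<in> T u'"
    and cx: "c \<le> length x" and cx': "c \<le> length x'"
    and E: "w u @ Zword V u x = w u' @ Zword V u' x'" for u u' x x'
  proof -
    define L where "L = w u @ Zword V u x"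
    define xc where "xc = take c x"
    define xc' where "xc' = take c x'"
    have xcT: "xc \<in> T u" using trees[OF u] x unfolding finite_rooted_tree_def xc_def by blast
    have xcT': "xc' \<in> T u'" using trees[OF u'] x' unfolding finite_rooted_tree_def xc'_def by blast
    have lxc: "length xc = c" using cx by (simp add: xc_def)
    have lxc': "length xc' = c" using cx' by (simp add: xc'_def)
    have e1: "w u @ Zword V u xc = take (length (w u) + c) L"
      using cx by (simp add: L_def xc_def Zword_take)
    have e2: "w u' @ Zword V u' xc' = take (length (w u') + c) L"
      using cx' by (simp add: L_def E xc'_def Zword_take)
    define zs where "zs = drop (length (w u) + c) (take (length (w u') + c) L)"
    have "take (length (w u') + c) L = take (length (w u) + c) (take (length (w u') + c) L) @ zs"
      unfolding zs_def by (rule append_take_drop_id[symmetric])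
    also have "take (length (w u) + c) (take (length (w u') + c) L) = take (length (w u) + c) L"
      using le by (simp add: min_absorb1)
    finally have "w u' @ Zword V u' xc' = w u @ Zword V u xc @ zs" using e1 e2 by simp
    then show False using notA u u' neq le xcT xcT' lxc lxc' by blast
  qed
  show ?thesis
  proof (intro ballI impI)
    fix u u' x x' assume u: "u \<in> S" and u': "u' \<in> S" and neq: "u \<noteq> u'"
      and x: "x \<in> T u" and x': "x' \<in> T u'" and cx: "c \<le> length x" and cx': "c \<le> length x'"
    show "w u @ Zword V u x \<noteq> w u' @ Zword V u' x'"
    proof
      assume E: "w u @ Zword V u x = w u' @ Zword V u' x'"
      show False
      proof (cases "length (w u) \<le> length (w u')")
        case True
        show False by (rule key[OF u u' neq True x x' cx cx' E])
      next
        case False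
        then have "length (w u') \<le> length (w u)" by simp
        then show False using key[OF u' u _ _ x' x cx' cx] neq E by metis
      qed
    qed
  qed
qed

lemma deficit_bound:
  assumes finS: "finite S" and finT: "\<And>u. u \<in> S \<Longrightarrow> finite (T u)"
    and nc: "\<forall>u\<in>S. \<forall>u'\<in>S. u \<noteq> u' \<longrightarrow> (\<forall>x\<in>T u. \<forall>x'\<in>T u'. c \<le> length x \<longrightarrow> c \<le> length x' \<longrightarrow>
            w u @ Zword V u x \<noteq> w u' @ Zword V u' x')"
  shows "(\<Sum>u\<in>S. card (Rset V T u)) \<le> card (\<Union>u\<in>S. word_cat (w u) (Rset V T u)) + Mc S T c"
proof -
  define W where "W u = word_cat (w u) (Rset V T u)" for u
  define Hi where "Hi u = (\<lambda>x. w u @ Zword V u x) ` {x \<in> T u. c \<le> length x}" for u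
  define Lo where "Lo u = (\<lambda>x. w u @ Zword V u x) ` {x \<in> T u. length x < c}" for u
  have W_eq: "W u = Hi u \<union> Lo u" for u
  proof -
    have "W u = (\<lambda>x. w u @ Zword V u x) ` T u" by (simp add: W_def word_cat_def Rset_def image_image)
    also have "T u = {x \<in> T u. c \<le> length x} \<union> {x \<in> T u. length x < c}" by auto
    finally show ?thesis unfolding Hi_def Lo_def image_Un .
  qed
  have cardW: "card (W u) = card (Rset V T u)" for u
    unfolding W_def word_cat_def by (rule card_image) (simp add: inj_on_def)
  have finHi: "finite (Hi u)" if "u \<in> S" for u using finT[OF that] unfolding Hi_def by simp
  have finLo: "finite (Lo u)" if "u \<in> S" for u using finT[OF that] unfolding Lo_def by simp
  have cLo: "card (Lo u) \<le> card {x \<in> T u. length x \<le> c}" if "u \<in> S" for u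
  proof -
    have "card (Lo u) \<le> card {x \<in> T u. length x < c}" unfolding Lo_def by (rule card_image_le) (use finT[OF that] in simp)
    also have "\<dots> \<le> card {x \<in> T u. length x \<le> c}" by (rule card_mono) (use finT[OF that] in auto)
    finally show ?thesis .
  qed
  have disj: "Hi u \<inter> Hi u' = {}" if "u \<in> S" "u' \<in> S" "u \<noteq> u'" for u u'
    using nc that unfolding Hi_def by blast
  have "(\<Sum>u\<in>S. card (Rset V T u)) = (\<Sum>u\<in>S. card (W u))" by (simp add: cardW)
  also have "\<dots> \<le> (\<Sum>u\<in>S. card (Hi u) + card {x \<in> T u. length x \<le> c})"
  proof (rule sum_mono)
    fix u assume u: "u \<in> S"
    have "card (W u) \<le> card (Hi u) + card (Lo u)" unfolding W_eq by (rule card_Un_le)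
    then show "card (W u) \<le> card (Hi u) + card {x \<in> T u. length x \<le> c}" using cLo[OF u] by simp
  qed
  also have "\<dots> = card (\<Union>u\<in>S. Hi u) + Mc S T c"
    by (simp add: sum.distrib Mc_def card_UN_disjoint finS finHi disj)
  also have "card (\<Union>u\<in>S. Hi u) \<le> card (\<Union>u\<in>S. W u)"
  proof -
    have "(\<Union>u\<in>S. Hi u) \<subseteq> (\<Union>u\<in>S. W u)" using W_eq by blast
    moreover have "finite (\<Union>u\<in>S. W u)" using finS finHi finLo W_eq by auto
    ultimately show ?thesis by (simp add: card_mono)
  qed
  finally show ?thesis unfolding W_def by simp
qed

lemma union_le:
  assumes finS: "finite S" and finT: "\<And>u. u \<in> S \<Longrightarrow> finite (T u)"
  shows "card (\<Union>u\<in>S. word_cat (w u) (Rset V T u)) \<le> (\<Sum>u\<in>S. card (Rset V T u))"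
proof -
  have "card (\<Union>u\<in>S. word_cat (w u) (Rset V T u)) \<le> (\<Sum>u\<in>S. card (word_cat (w u) (Rset V T u)))"
    by (rule card_UN_le[OF finS])
  also have "\<dots> = (\<Sum>u\<in>S. card (Rset V T u))"
    by (rule sum.cong) (auto simp: word_cat_def intro!: card_image simp: inj_on_def)
  finally show ?thesis .
qed

theorem lemma3p9:
  fixes b c :: nat and S :: "'u set" and T :: "'u \<Rightarrow> nat list set" and w :: "'u \<Rightarrow> nat list"
  assumes "b \<ge> 2" and "c \<ge> 1" and "finite S"
    and "\<And>u. u \<in> S \<Longrightarrow> finite_rooted_tree (T u)"
    and "\<And>u. u \<in> S \<Longrightarrow> w u \<in> words b"
  shows "\<exists>A. A \<subseteq> PiE (label_index S T) (\<lambda>_. {1..b})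
           \<and> measure_pmf.prob (label_law b S T) A \<le> real b powi (- int c) * real (Mc S T c) ^ 2
           \<and> (\<forall>V \<in> PiE (label_index S T) (\<lambda>_. {1..b}) - A.
                0 \<le> (\<Sum>u\<in>S. int (card (Rset V T u))) - int (card (\<Union>u\<in>S. word_cat (w u) (Rset V T u)))
              \<and> (\<Sum>u\<in>S. int (card (Rset V T u))) - int (card (\<Union>u\<in>S. word_cat (w u) (Rset V T u)))
                  \<le> int (Mc S T c))"
proof -
  define I where "I = label_index S T"
  define X where "X = PiE I (\<lambda>_. {1..b::nat})"
  define P where "P = Sigma S (\<lambda>u. {x \<in> T u. length x \<le> c})"
  define Pairs where "Pairs = {((u,x),(u',x')). (u,x) \<in> P \<and> (u',x') \<in> P \<and> u \<noteq> u'
      \<and> length (w u) \<le> length (w u') \<and> length x = c \<and> length x' = c}"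
  define Ap where "Ap = (\<lambda>((u,x),(u',x')). {V \<in> X. \<exists>zs. w u' @ Zword V u' x' = w u @ Zword V u x @ zs})"
  define A where "A = (\<Union>p\<in>Pairs. Ap p)"
  have trees: "\<And>u. u \<in> S \<Longrightarrow> finite_rooted_tree (T u)" by (rule assms(4))
  have finT: "\<And>u. u \<in> S \<Longrightarrow> finite (T u)" using assms(4) finite_rooted_tree_def by blast
  have I_eq: "I = Sigma S T" by (auto simp: I_def label_index_def)
  have finI: "finite I" using I_eq assms(3) finT by auto
  have finX: "finite X" using finI by (simp add: X_def finite_PiE)
  have neX: "X \<noteq> {}" using assms(1) by (auto simp: X_def PiE_eq_empty_iff)
  have cardX: "card X = b ^ card I" using finI by (simp add: X_def card_PiE)
  have finP: "finite P" using assms(3) finT by (auto simp: P_def)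
  have cardP: "card P = Mc S T c" using assms(3) finT by (simp add: P_def Mc_def)
  have PairsP: "Pairs \<subseteq> P \<times> P" by (auto simp: Pairs_def)
  have finPairs: "finite Pairs" using PairsP finP finite_subset by blast
  have cardPairs: "card Pairs \<le> Mc S T c ^ 2"
  proof -
    have "card Pairs \<le> card (P \<times> P)" using PairsP finP by (metis card_mono finite_cartesian_product)
    then show ?thesis by (simp add: card_cartesian_product cardP power2_eq_square)
  qed
  have Apb: "card (Ap p) * b ^ c \<le> b ^ card I" if "p \<in> Pairs" for p
  proof -
    obtain u x u' x' where p: "p = ((u,x),(u',x'))" by (metis prod.collapse)
    have u: "u \<in> S" and x: "x \<in> T u" and neq: "u \<noteq> u'" and le: "length (w u) \<le> length (w u')"
      and lx: "length x = c"
      using that by (auto simp: p Pairs_def P_def)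
    have JI: "(\<lambda>i. (u, take i x)) ` {1..c} \<subseteq> I"
      using trees[OF u] x u unfolding finite_rooted_tree_def I_eq by auto
    show ?thesis using pair_count[OF finI neq lx JI le, of b x']
      by (simp add: p Ap_def X_def)
  qed
  have AX: "A \<subseteq> X" by (auto simp: A_def Ap_def)
  have cardA: "card A * b ^ c \<le> Mc S T c ^ 2 * b ^ card I"
  proof -
    have "card A \<le> (\<Sum>p\<in>Pairs. card (Ap p))" unfolding A_def by (rule card_UN_le[OF finPairs])
    then have "card A * b ^ c \<le> (\<Sum>p\<in>Pairs. card (Ap p)) * b ^ c" by simp
    also have "\<dots> = (\<Sum>p\<in>Pairs. card (Ap p) * b ^ c)" by (simp add: sum_distrib_right)
    also have "\<dots> \<le> (\<Sum>p\<in>Pairs. b ^ card I)" by (rule sum_mono) (rule Apb)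
    also have "\<dots> = card Pairs * b ^ card I" by simp
    also have "\<dots> \<le> Mc S T c ^ 2 * b ^ card I" using cardPairs by simp
    finally show ?thesis .
  qed
  have prob: "measure_pmf.prob (label_law b S T) A = real (card A) / real (card X)"
    using measure_pmf_of_set[OF neX finX, of A] AX
    by (simp add: label_law_def X_def I_def Int_absorb1)
  have bpos: "real b > 0" using assms(1) by simp
  have probb: "measure_pmf.prob (label_law b S T) A \<le> real b powi (- int c) * real (Mc S T c) ^ 2"
  proof -
    have r: "real (card A) * real b ^ c \<le> real (Mc S T c) ^ 2 * real b ^ card I"
      using cardA by (metis of_nat_le_iff of_nat_mult of_nat_power)
    have "real (card A) / real (card X) = real (card A) / real b ^ card I" by (simp add: cardX)
    also have "\<dots> \<le> real (Mc S T c) ^ 2 / real b ^ c"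
      using r bpos by (simp add: field_simps)
    also have "\<dots> = real b powi (- int c) * real (Mc S T c) ^ 2"
      by (simp add: power_int_minus field_simps)
    finally show ?thesis using prob by simp
  qed
  have good: "0 \<le> (\<Sum>u\<in>S. int (card (Rset V T u))) - int (card (\<Union>u\<in>S. word_cat (w u) (Rset V T u)))
              \<and> (\<Sum>u\<in>S. int (card (Rset V T u))) - int (card (\<Union>u\<in>S. word_cat (w u) (Rset V T u)))
                  \<le> int (Mc S T c)" if V: "V \<in> X - A" for V
  proof -
    have notA: "\<not> (\<exists>u\<in>S. \<exists>u'\<in>S. u \<noteq> u' \<and> length (w u) \<le> length (w u') \<and>
       (\<exists>x\<in>T u. \<exists>x'\<in>T u'. length x = c \<and> length x' = c \<and>
         (\<exists>zs. w u' @ Zword V u' x' = w u @ Zword V u x @ zs)))"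
    proof
      assume "\<exists>u\<in>S. \<exists>u'\<in>S. u \<noteq> u' \<and> length (w u) \<le> length (w u') \<and>
       (\<exists>x\<in>T u. \<exists>x'\<in>T u'. length x = c \<and> length x' = c \<and>
         (\<exists>zs. w u' @ Zword V u' x' = w u @ Zword V u x @ zs))"
      then obtain u u' x x' zs where h: "u \<in> S" "u' \<in> S" "u \<noteq> u'" "length (w u) \<le> length (w u')"
        "x \<in> T u" "x' \<in> T u'" "length x = c" "length x' = c"
        "w u' @ Zword V u' x' = w u @ Zword V u x @ zs" by blast
      have "((u,x),(u',x')) \<in> Pairs" using h by (auto simp: Pairs_def P_def)
      moreover have "V \<in> Ap ((u,x),(u',x'))" using h V by (auto simp: Ap_def)
      ultimately have "V \<in> A" by (auto simp: A_def)
      then show False using V by simp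
    qed
    note nc = nc_from[OF trees notA]
    have d1: "(\<Sum>u\<in>S. card (Rset V T u)) \<le> card (\<Union>u\<in>S. word_cat (w u) (Rset V T u)) + Mc S T c"
      using deficit_bound[where S=S and T=T and w=w and V=V and c=c] assms(3) finT nc by blast
    have d2: "card (\<Union>u\<in>S. word_cat (w u) (Rset V T u)) \<le> (\<Sum>u\<in>S. card (Rset V T u))"
      using union_le[where S=S and T=T and w=w and V=V] assms(3) finT by blast
    have s: "(\<Sum>u\<in>S. int (card (Rset V T u))) = int (\<Sum>u\<in>S. card (Rset V T u))" by simp
    show ?thesis unfolding s using d1 d2 by linarith
  qed
  show ?thesis
    by (rule exI[of _ A]) (use AX probb good in \<open>auto simp: X_def I_def\<close>)
qed

end
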